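(* Let $G$ be a graph such that three or more edges join vertices $v$ and $w$. If $e$ is one of these edges, then $\lfloor \mathrm{sp}\rfloor(G\backslash e)=\lfloor \mathrm{sp}\rfloor(G)$.
   Context: All graphs are finite, have at least one vertex, have no loops, and may have multiple (parallel) edges. $G\backslash e$ denotes deletion of edge $e$. A unique shortest path is a shortest $u$–$v$ path $P$ such that every $u$–$v$ path with the same number of vertices is identical to $P$, where two paths with different edge sequences are different even if their vertex sequences agree; a single vertex is a unique shortest path. The parade number $\mathrm{usp}(G)$ is the largest number of vertices of a unique shortest path in $G$. The spectator number is $\mathrm{sp}(G)=|V(G)|-\mathrm{usp}(G)$. A minor of $H$ is any graph obtained from $H$ by a sequence of: deleting an isolated vertex, deleting an edge, contracting an edge that has no edge parallel to it. The spectator floor $\lfloor \mathrm{sp}\rfloor(G)$ is the minimum of $\mathrm{sp}(H)$ over all graphs $H$ of which $G$ is a minor. *)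

theory Defs
  imports Main
begin

text \<open>Finite multigraphs without loops. Vertices and edges are labelled by natural
numbers; every finite graph is isomorphic to one of this form.\<close>

record graph =
  verts :: "nat set"
  edges :: "nat set"
  ends  :: "nat \<Rightarrow> nat set"

definition wf_graph :: "graph \<Rightarrow> bool" where
  "wf_graph G \<longleftrightarrow> finite (verts G) \<and> verts G \<noteq> {} \<and> finite (edges G) \<and>
     (\<forall>e\<in>edges G. card (ends G e) = 2 \<and> ends G e \<subseteq> verts G)"

definition delete_edge :: "graph \<Rightarrow> nat \<Rightarrow> graph" where
  "delete_edge G e = G\<lparr>edges := edges G - {e}\<rparr>"

definition is_path :: "graph \<Rightarrow> nat \<Rightarrow> nat \<Rightarrow> nat list \<Rightarrow> nat list \<Rightarrow> bool" where
  "is_path G u v vs es \<longleftrightarrow> length vs = Suc (length es) \<and> distinct vs \<and>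
     set vs \<subseteq> verts G \<and> set es \<subseteq> edges G \<and> hd vs = u \<and> last vs = v \<and>
     (\<forall>i<length es. ends G (es ! i) = {vs ! i, vs ! Suc i})"

definition unique_shortest_path :: "graph \<Rightarrow> nat list \<Rightarrow> nat list \<Rightarrow> bool" where
  "unique_shortest_path G vs es \<longleftrightarrow> (\<exists>u v. is_path G u v vs es \<and>
     (\<forall>vs' es'. is_path G u v vs' es' \<longrightarrow> length vs \<le> length vs') \<and>
     (\<forall>vs' es'. is_path G u v vs' es' \<and> length vs' = length vs \<longrightarrow> vs' = vs \<and> es' = es))"

definition usp :: "graph \<Rightarrow> nat" where
  "usp G = Max {length vs | vs es. unique_shortest_path G vs es}"

definition sp :: "graph \<Rightarrow> nat" where
  "sp G = card (verts G) - usp G"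

definition graph_iso :: "graph \<Rightarrow> graph \<Rightarrow> bool" where
  "graph_iso G H \<longleftrightarrow> (\<exists>f g. bij_betw f (verts G) (verts H) \<and> bij_betw g (edges G) (edges H) \<and>
     (\<forall>e\<in>edges G. ends H (g e) = f ` ends G e))"

inductive minor_step :: "graph \<Rightarrow> graph \<Rightarrow> bool" where
  del_vertex: "\<lbrakk>x \<in> verts H; \<forall>e\<in>edges H. x \<notin> ends H e\<rbrakk>
     \<Longrightarrow> minor_step H (H\<lparr>verts := verts H - {x}\<rparr>)"
| del_edge: "e \<in> edges H \<Longrightarrow> minor_step H (delete_edge H e)"
| contract: "\<lbrakk>e \<in> edges H; ends H e = {a, b}; a \<noteq> b;
     \<forall>e'\<in>edges H. e' \<noteq> e \<longrightarrow> ends H e' \<noteq> ends H e\<rbrakk>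
     \<Longrightarrow> minor_step H \<lparr>verts = verts H - {b}, edges = edges H - {e},
           ends = (\<lambda>f. (\<lambda>x. if x = b then a else x) ` ends H f)\<rparr>"

definition is_minor :: "graph \<Rightarrow> graph \<Rightarrow> bool" where
  "is_minor G H \<longleftrightarrow> (\<exists>H'. minor_step\<^sup>*\<^sup>* H H' \<and> graph_iso H' G)"

definition sp_floor :: "graph \<Rightarrow> nat" where
  "sp_floor G = Inf {sp H | H. wf_graph H \<and> is_minor G H}"

end

theory Submission
  imports Defs
begin


definition gw :: "graph \<Rightarrow> bool" where
  "gw G \<longleftrightarrow> (\<forall>g\<in>edges G. card (ends G g) = 2 \<and> ends G g \<subseteq> verts G)"

inductive walk :: "graph \<Rightarrow> nat \<Rightarrow> nat \<Rightarrow> nat \<Rightarrow> bool" for G where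
  w0: "walk G x x 0"
| wS: "g \<in> edges G \<Longrightarrow> ends G g = {x, y} \<Longrightarrow> walk G y z n \<Longrightarrow> walk G x z (Suc n)"

lemma walk_append: "walk G x y n \<Longrightarrow> walk G y z m \<Longrightarrow> walk G x z (n + m)"
  by (induction rule: walk.induct) (auto intro: walk.intros)

lemma walk_edge: "g \<in> edges G \<Longrightarrow> ends G g = {x, y} \<Longrightarrow> walk G x y 1"
  using wS[OF _ _ w0] by simp

lemma walk_rev: "walk G x y n \<Longrightarrow> walk G y x n"
proof (induction rule: walk.induct)
  case (w0 x) then show ?case by (rule walk.w0)
next
  case (wS g x y z n)
  have "walk G y x 1" using wS(1,2) walk_edge[of g G y x] by (simp add: insert_commute)
  from walk_append[OF wS(4) this] show ?case by simp
qed

lemma path_prefix: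
  assumes "is_path G u v vs es" "k \<le> length es"
    "\<forall>i<k. es!i \<in> edges G0 \<and> ends G0 (es!i) = ends G (es!i)"
  shows "walk G0 u (vs!k) k"
  using assms(2,3)
proof (induction k)
  case 0
  from assms(1) have "vs \<noteq> []" "hd vs = u" unfolding is_path_def by auto
  then show ?case by (simp add: hd_conv_nth w0)
next
  case (Suc k)
  then have "walk G0 u (vs!k) k" by auto
  moreover have "walk G0 (vs!k) (vs!Suc k) 1"
    using Suc.prems assms(1) unfolding is_path_def by (intro walk_edge[of "es!k"]) auto
  ultimately show ?case using walk_append by fastforce
qed

lemma path_suffix:
  assumes "is_path G u v vs es" "k \<le> length es"
    "\<forall>i. k \<le> i \<longrightarrow> i < length es \<longrightarrow> es!i \<in> edges G0 \<and> ends G0 (es!i) = ends G (es!i)"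
  shows "walk G0 (vs!k) v (length es - k)"
proof -
  have "\<forall>k. length es - k = m \<longrightarrow> k \<le> length es \<longrightarrow>
    (\<forall>i. k \<le> i \<longrightarrow> i < length es \<longrightarrow> es!i \<in> edges G0 \<and> ends G0 (es!i) = ends G (es!i))
    \<longrightarrow> walk G0 (vs!k) v (length es - k)" for m
  proof (induction m)
    case 0
    show ?case
    proof (intro allI impI)
      fix k assume "length es - k = 0" "k \<le> length es"
      then have "k = length es" by simp
      moreover from assms(1) have "vs \<noteq> []" "last vs = v" "length vs = Suc (length es)"
        unfolding is_path_def by auto
      ultimately have "vs!k = v" by (simp add: last_conv_nth)
      then show "walk G0 (vs!k) v (length es - k)" using \<open>k = length es\<close> by (simp add: w0)
    qed
  next
    case (Suc m)
    show ?case
    proof (intro allI impI)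
      fix k assume a: "length es - k = Suc m" "k \<le> length es"
        "\<forall>i. k \<le> i \<longrightarrow> i < length es \<longrightarrow> es!i \<in> edges G0 \<and> ends G0 (es!i) = ends G (es!i)"
      have "length es - Suc k = m" "Suc k \<le> length es" using a(1,2) by auto
      moreover have "\<forall>i. Suc k \<le> i \<longrightarrow> i < length es \<longrightarrow> es!i \<in> edges G0 \<and> ends G0 (es!i) = ends G (es!i)"
        using a(3) by auto
      ultimately have "walk G0 (vs!Suc k) v (length es - Suc k)" using Suc.IH by blast
      moreover have "es!k \<in> edges G0" "ends G0 (es!k) = {vs!k, vs!Suc k}"
        using a assms(1) unfolding is_path_def by auto
      ultimately have "walk G0 (vs!k) v (Suc (length es - Suc k))" by (meson wS)
      then show "walk G0 (vs!k) v (length es - k)" using a(1) by (simp add: Suc_diff_Suc)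
    qed
  qed
  then show ?thesis using assms by blast
qed

lemma is_path_drop:
  assumes "is_path G u v vs es" "k < length vs"
  shows "is_path G (vs!k) v (drop k vs) (drop k es)"
  using assms unfolding is_path_def
  by (auto simp: hd_drop_conv_nth last_drop set_drop_subset[THEN subsetD] dest: in_set_dropD)

lemma walk_to_path:
  assumes "walk G x y n" "gw G" "x \<in> verts G"
  shows "\<exists>vs es. is_path G x y vs es \<and> length es \<le> n"
  using assms
proof (induction rule: walk.induct)
  case (w0 x)
  have "is_path G x x [x] []" using w0 unfolding is_path_def by auto
  then show ?case by blast
next
  case (wS g x y z n)
  have "y \<in> verts G" using wS unfolding gw_def by auto
  then obtain vs es where p: "is_path G y z vs es" "length es \<le> n" using wS by blast
  show ?case
  proof (cases "x \<in> set vs")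
    case True
    then obtain k where k: "k < length vs" "vs!k = x" by (auto simp: in_set_conv_nth)
    from is_path_drop[OF p(1) k(1)] k p(2) show ?thesis by (intro exI[of _ "drop k vs"] exI[of _ "drop k es"]) auto
  next
    case False
    have "is_path G x z (x # vs) (g # es)"
      using p(1) False wS.hyps wS.prems unfolding is_path_def
      by (auto simp: nth_Cons' hd_conv_nth)
    then show ?thesis using p(2) by fastforce
  qed
qed


definition add_edge :: "graph \<Rightarrow> nat \<Rightarrow> nat set \<Rightarrow> graph" where
  "add_edge H f S = H\<lparr>edges := insert f (edges H), ends := (ends H)(f := S)\<rparr>"

definition cstep :: "graph \<Rightarrow> nat set \<Rightarrow> nat \<Rightarrow> nat \<Rightarrow> bool" where
  "cstep G Y a b \<longleftrightarrow> a \<in> Y \<and> b \<in> Y \<and> (\<exists>g\<in>edges G. ends G g = {a, b})"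

abbreviation conn :: "graph \<Rightarrow> nat set \<Rightarrow> nat \<Rightarrow> nat \<Rightarrow> bool" where
  "conn G Y \<equiv> (cstep G Y)\<^sup>*\<^sup>*"

lemma cstep_sym: "cstep G Y a b \<Longrightarrow> cstep G Y b a"
  unfolding cstep_def by (auto simp: insert_commute)

lemma conn_sym: "conn G Y a b \<Longrightarrow> conn G Y b a"
proof (induction rule: rtranclp_induct)
  case base then show ?case by simp
next
  case (step y z)
  then show ?case using cstep_sym converse_rtranclp_into_rtranclp by metis
qed

lemma card2_image:
  assumes "card X = 2" "X \<noteq> {a, b}" "a \<noteq> b"
  shows "card ((\<lambda>x. if x = b then a else x) ` X) = 2"
proof -
  have fin: "finite X" using assms(1) card.infinite by fastforce
  have "inj_on (\<lambda>x. if x = b then a else x) X"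
  proof (rule inj_onI)
    fix x y assume xy: "x \<in> X" "y \<in> X" "(if x = b then a else x) = (if y = b then a else y)"
    show "x = y"
    proof (rule ccontr)
      assume "x \<noteq> y"
      then have "{x, y} = {a, b}" using xy(3) by (auto split: if_splits)
      moreover have "X = {x, y}"
      proof -
        have "{x, y} \<subseteq> X" using xy by auto
        moreover have "card {x, y} = 2" using \<open>x \<noteq> y\<close> by simp
        ultimately show ?thesis using fin assms(1) by (metis card_subset_eq)
      qed
      ultimately show False using assms(2) by simp
    qed
  qed
  then show ?thesis using assms(1) card_image by metis
qed

lemma gw_step: "minor_step H H1 \<Longrightarrow> gw H \<Longrightarrow> gw H1"
proof (induction rule: minor_step.induct)
  case (del_vertex x H) then show ?case unfolding gw_def by auto
next
  case (del_edge e H) then show ?case unfolding gw_def delete_edge_def by auto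
next
  case (contract e H a b)
  show ?case unfolding gw_def
  proof (intro ballI conjI)
    fix g assume g: "g \<in> edges \<lparr>verts = verts H - {b}, edges = edges H - {e},
           ends = \<lambda>f. (\<lambda>x. if x = b then a else x) ` ends H f\<rparr>"
    then have g1: "g \<in> edges H" "g \<noteq> e" by auto
    then have "ends H g \<noteq> {a, b}" "card (ends H g) = 2" "ends H g \<subseteq> verts H"
      using contract unfolding gw_def by auto
    moreover have "a \<in> verts H" using contract unfolding gw_def by auto
    ultimately show "card (ends \<lparr>verts = verts H - {b}, edges = edges H - {e},
           ends = \<lambda>f. (\<lambda>x. if x = b then a else x) ` ends H f\<rparr> g) = 2"
      "ends \<lparr>verts = verts H - {b}, edges = edges H - {e},
           ends = \<lambda>f. (\<lambda>x. if x = b then a else x) ` ends H f\<rparr> g \<subseteq> verts \<lparr>verts = verts H - {b}, edges = edges H - {e},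
           ends = \<lambda>f. (\<lambda>x. if x = b then a else x) ` ends H f\<rparr>"
      using card2_image[of "ends H g" a b] contract(3) by auto
  qed
qed

lemma gw_steps: "minor_step\<^sup>*\<^sup>* H H1 \<Longrightarrow> gw H \<Longrightarrow> gw H1"
  by (induction rule: rtranclp_induct) (auto intro: gw_step)

definition trk :: "graph \<Rightarrow> graph \<Rightarrow> (nat \<Rightarrow> nat) \<Rightarrow> bool" where
  "trk H H' \<pi> \<longleftrightarrow> gw H' \<and> verts H' \<subseteq> verts H \<and> edges H' \<subseteq> edges H \<and>
    (\<forall>x. x \<notin> verts H \<longrightarrow> \<pi> x = x) \<and>
    (\<forall>g\<in>edges H'. ends H' g = \<pi> ` ends H g) \<and>
    (\<forall>f S. f \<notin> edges H \<longrightarrow> S \<subseteq> verts H \<longrightarrow> card (\<pi> ` S) = 2 \<longrightarrow> \<pi> ` S \<subseteq> verts H' \<longrightarrow>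
        minor_step\<^sup>*\<^sup>* (add_edge H f S) (add_edge H' f (\<pi> ` S))) \<and>
    (\<forall>y\<in>verts H'. \<forall>x1 x2. x1 \<in> verts H \<longrightarrow> \<pi> x1 = y \<longrightarrow> x2 \<in> verts H \<longrightarrow> \<pi> x2 = y \<longrightarrow>
        conn H {x \<in> verts H. \<pi> x = y} x1 x2)"

lemma trk_refl: "gw H \<Longrightarrow> trk H H id"
  unfolding trk_def by auto


lemma trk_del_vertex:
  assumes x0: "x0 \<in> verts H" "\<forall>e\<in>edges H. x0 \<notin> ends H e"
    and t: "trk (H\<lparr>verts := verts H - {x0}\<rparr>) H' \<pi>"
  shows "trk H H' \<pi>"
proof -
  let ?H1 = "H\<lparr>verts := verts H - {x0}\<rparr>"
  have pi0: "\<pi> x0 = x0" "x0 \<notin> verts H'" using t unfolding trk_def by auto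
  show ?thesis unfolding trk_def
  proof (intro conjI allI impI ballI)
    show "gw H'" "verts H' \<subseteq> verts H" "edges H' \<subseteq> edges H" using t unfolding trk_def by auto
  next
    fix x assume "x \<notin> verts H" then show "\<pi> x = x" using t unfolding trk_def by auto
  next
    fix g assume "g \<in> edges H'" then show "ends H' g = \<pi> ` ends H g" using t unfolding trk_def by auto
  next
    fix f S assume a: "f \<notin> edges H" "S \<subseteq> verts H" "card (\<pi> ` S) = 2" "\<pi> ` S \<subseteq> verts H'"
    have "x0 \<notin> S" using a(4) pi0 by auto
    then have S1: "S \<subseteq> verts ?H1" using a(2) by auto
    have st: "minor_step (add_edge H f S) ((add_edge H f S)\<lparr>verts := verts (add_edge H f S) - {x0}\<rparr>)"
      by (rule minor_step.del_vertex) (use x0 \<open>x0 \<notin> S\<close> in \<open>auto simp: add_edge_def\<close>)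
    have eq: "(add_edge H f S)\<lparr>verts := verts (add_edge H f S) - {x0}\<rparr> = add_edge ?H1 f S"
      by (simp add: add_edge_def)
    have "minor_step\<^sup>*\<^sup>* (add_edge ?H1 f S) (add_edge H' f (\<pi> ` S))"
      using t a S1 unfolding trk_def by auto
    then show "minor_step\<^sup>*\<^sup>* (add_edge H f S) (add_edge H' f (\<pi> ` S))"
      using st eq by (metis converse_rtranclp_into_rtranclp)
  next
    fix y x1 x2 assume a: "y \<in> verts H'" "x1 \<in> verts H" "\<pi> x1 = y" "x2 \<in> verts H" "\<pi> x2 = y"
    have "x1 \<noteq> x0" "x2 \<noteq> x0" using a pi0 by auto
    then have "conn ?H1 {x \<in> verts ?H1. \<pi> x = y} x1 x2" using t a unfolding trk_def by auto
    moreover have "{x \<in> verts ?H1. \<pi> x = y} = {x \<in> verts H. \<pi> x = y}" using a pi0 by auto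
    moreover have "cstep ?H1 = cstep H" unfolding cstep_def by (intro ext) simp
    ultimately show "conn H {x \<in> verts H. \<pi> x = y} x1 x2" by simp
  qed
qed

lemma trk_del_edge:
  assumes e: "e \<in> edges H"
    and t: "trk (delete_edge H e) H' \<pi>"
  shows "trk H H' \<pi>"
proof -
  let ?H1 = "delete_edge H e"
  show ?thesis unfolding trk_def
  proof (intro conjI allI impI ballI)
    show "gw H'" "verts H' \<subseteq> verts H" "edges H' \<subseteq> edges H" using t unfolding trk_def delete_edge_def by auto
  next
    fix x assume "x \<notin> verts H" then show "\<pi> x = x" using t unfolding trk_def delete_edge_def by auto
  next
    fix g assume "g \<in> edges H'" then show "ends H' g = \<pi> ` ends H g" using t unfolding trk_def delete_edge_def by auto
  next
    fix f S assume a: "f \<notin> edges H" "S \<subseteq> verts H" "card (\<pi> ` S) = 2" "\<pi> ` S \<subseteq> verts H'"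
    have st: "minor_step (add_edge H f S) (delete_edge (add_edge H f S) e)"
      by (rule minor_step.del_edge) (use e in \<open>auto simp: add_edge_def\<close>)
    have "f \<noteq> e" using a e by auto
    then have eq: "delete_edge (add_edge H f S) e = add_edge ?H1 f S"
      by (simp add: add_edge_def delete_edge_def insert_Diff_if)
    have "minor_step\<^sup>*\<^sup>* (add_edge ?H1 f S) (add_edge H' f (\<pi> ` S))"
      using t a unfolding trk_def delete_edge_def by auto
    then show "minor_step\<^sup>*\<^sup>* (add_edge H f S) (add_edge H' f (\<pi> ` S))"
      using st eq by (metis converse_rtranclp_into_rtranclp)
  next
    fix y x1 x2 assume a: "y \<in> verts H'" "x1 \<in> verts H" "\<pi> x1 = y" "x2 \<in> verts H" "\<pi> x2 = y"
    then have "conn ?H1 {x \<in> verts ?H1. \<pi> x = y} x1 x2" using t a unfolding trk_def delete_edge_def by auto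
    moreover have "{x \<in> verts ?H1. \<pi> x = y} = {x \<in> verts H. \<pi> x = y}" by (simp add: delete_edge_def)
    moreover have "cstep ?H1 Y \<le> cstep H Y" for Y unfolding cstep_def delete_edge_def by auto
    ultimately show "conn H {x \<in> verts H. \<pi> x = y} x1 x2" by (metis rtranclp_mono predicate2D)
  qed
qed


lemma trk_contract:
  fixes c and a b :: nat
  defines "c \<equiv> (\<lambda>x. if x = b then a else x)"
  assumes gwH: "gw H"
    and e: "e \<in> edges H" "ends H e = {a, b}" "a \<noteq> b"
       "\<forall>e'\<in>edges H. e' \<noteq> e \<longrightarrow> ends H e' \<noteq> ends H e"
    and t: "trk \<lparr>verts = verts H - {b}, edges = edges H - {e}, ends = \<lambda>f. c ` ends H f\<rparr> H' \<pi>1"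
  shows "trk H H' (\<pi>1 \<circ> c)"
proof -
  let ?H1 = "\<lparr>verts = verts H - {b}, edges = edges H - {e}, ends = \<lambda>f. c ` ends H f\<rparr>"
  have ab: "a \<in> verts H" "b \<in> verts H" using gwH e unfolding gw_def by auto
  have cx: "c x = x" if "x \<noteq> b" for x using that unfolding c_def by simp
  have cb: "c b = a" unfolding c_def by simp
  have cv: "c x \<in> verts ?H1" if "x \<in> verts H" for x using that ab e(3) unfolding c_def by auto
  show ?thesis unfolding trk_def
  proof (intro conjI allI impI ballI)
    show "gw H'" "verts H' \<subseteq> verts H" "edges H' \<subseteq> edges H" using t unfolding trk_def by auto
  next
    fix x assume "x \<notin> verts H"
    then have "x \<noteq> b" "x \<notin> verts ?H1" using ab by auto
    then show "(\<pi>1 \<circ> c) x = x" using t cx unfolding trk_def by auto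
  next
    fix g assume "g \<in> edges H'"
    then show "ends H' g = (\<pi>1 \<circ> c) ` ends H g" using t unfolding trk_def by (auto simp: image_comp)
  next
    fix f S assume a: "f \<notin> edges H" "S \<subseteq> verts H" "card ((\<pi>1 \<circ> c) ` S) = 2" "(\<pi>1 \<circ> c) ` S \<subseteq> verts H'"
    have S1: "c ` S \<subseteq> verts ?H1" using a(2) cv by auto
    have Sab: "S \<noteq> {a, b}"
    proof
      assume "S = {a, b}"
      then have "(\<pi>1 \<circ> c) ` S = {\<pi>1 a}" using cb cx e(3) by auto
      then show False using a(3) by simp
    qed
    have fe: "f \<noteq> e" using a e by auto
    have st: "minor_step (add_edge H f S) \<lparr>verts = verts (add_edge H f S) - {b}, edges = edges (add_edge H f S) - {e},
           ends = \<lambda>g. c ` ends (add_edge H f S) g\<rparr>"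
      unfolding c_def
      by (rule minor_step.contract) (use e Sab fe in \<open>auto simp: add_edge_def\<close>)
    have eq: "\<lparr>verts = verts (add_edge H f S) - {b}, edges = edges (add_edge H f S) - {e},
           ends = \<lambda>g. c ` ends (add_edge H f S) g\<rparr> = add_edge ?H1 f (c ` S)"
      using fe by (simp add: add_edge_def insert_Diff_if fun_eq_iff)
    have T: "\<forall>f S. f \<notin> edges ?H1 \<longrightarrow> S \<subseteq> verts ?H1 \<longrightarrow> card (\<pi>1 ` S) = 2 \<longrightarrow> \<pi>1 ` S \<subseteq> verts H' \<longrightarrow>
        minor_step\<^sup>*\<^sup>* (add_edge ?H1 f S) (add_edge H' f (\<pi>1 ` S))"
      using t unfolding trk_def by blast
    have "f \<notin> edges ?H1" "card (\<pi>1 ` (c ` S)) = 2" "\<pi>1 ` (c ` S) \<subseteq> verts H'"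
      using a by (auto simp: image_comp)
    then have "minor_step\<^sup>*\<^sup>* (add_edge ?H1 f (c ` S)) (add_edge H' f (\<pi>1 ` (c ` S)))"
      using T S1 by blast
    then show "minor_step\<^sup>*\<^sup>* (add_edge H f S) (add_edge H' f ((\<pi>1 \<circ> c) ` S))"
      using st eq by (metis converse_rtranclp_into_rtranclp image_comp)
  next
    fix y x1 x2 assume a: "y \<in> verts H'" "x1 \<in> verts H" "(\<pi>1 \<circ> c) x1 = y" "x2 \<in> verts H" "(\<pi>1 \<circ> c) x2 = y"
    define C where "C = {x \<in> verts H. (\<pi>1 \<circ> c) x = y}"
    define C1 where "C1 = {x \<in> verts ?H1. \<pi>1 x = y}"
    have C1C: "C1 \<subseteq> C" unfolding C1_def C_def using cx by auto
    have A: "conn H C x (c x)" if "x \<in> C" for x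
    proof (cases "x = b")
      case True
      have "a \<in> C" using that True cb cx[of a] e(3) ab unfolding C_def by auto
      then have "cstep H C b a" using that True e unfolding cstep_def by (auto simp: insert_commute)
      then show ?thesis using True cb by auto
    next
      case False then show ?thesis using cx by simp
    qed
    have cC1: "c x \<in> C1" if "x \<in> C" for x using that cv unfolding C_def C1_def by auto
    have B: "conn H C z1 z2" if "conn ?H1 C1 z1 z2" for z1 z2
      using that
    proof (induction rule: rtranclp_induct)
      case base then show ?case by simp
    next
      case (step z z')
      from step(2) obtain g where g: "z \<in> C1" "z' \<in> C1" "g \<in> edges H" "g \<noteq> e" "c ` ends H g = {z, z'}"
        unfolding cstep_def by auto
      have "card (ends H g) = 2" "ends H g \<subseteq> verts H" using gwH g(3) unfolding gw_def by auto
      then obtain p q where pq: "ends H g = {p, q}" "p \<noteq> q" by (meson card_2_iff)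
      have "p \<in> C" "q \<in> C"
        using pq g \<open>ends H g \<subseteq> verts H\<close> unfolding C1_def C_def by (auto simp: image_iff)
      have cs: "cstep H C p q" "cstep H C q p" using \<open>p \<in> C\<close> \<open>q \<in> C\<close> g(3) pq
        unfolding cstep_def by (auto simp: insert_commute)
      have "(c p = z \<and> c q = z') \<or> (c p = z' \<and> c q = z)" using g(5) pq(1) by (auto simp: doubleton_eq_iff)
      then have "conn H C z z'"
      proof
        assume h: "c p = z \<and> c q = z'"
        have "conn H C z p" using A[OF \<open>p \<in> C\<close>] h conn_sym by auto
        moreover have "conn H C q z'" using A[OF \<open>q \<in> C\<close>] h by auto
        ultimately show ?thesis using cs(1) by (meson converse_rtranclp_into_rtranclp rtranclp_trans)
      next
        assume h: "c p = z' \<and> c q = z"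
        have "conn H C z q" using A[OF \<open>q \<in> C\<close>] h conn_sym by auto
        moreover have "conn H C p z'" using A[OF \<open>p \<in> C\<close>] h by auto
        ultimately show ?thesis using cs(2) by (meson converse_rtranclp_into_rtranclp rtranclp_trans)
      qed
      then show ?case using step(3) by (meson rtranclp_trans)
    qed
    have x12: "x1 \<in> C" "x2 \<in> C" using a unfolding C_def by auto
    have "conn ?H1 C1 (c x1) (c x2)"
      using t a cv unfolding trk_def C1_def by auto
    then have "conn H C (c x1) (c x2)" using B by blast
    moreover have "conn H C x1 (c x1)" "conn H C (c x2) x2" using A x12 conn_sym by auto
    ultimately show "conn H C x1 x2" by (meson rtranclp_trans)
  qed
qed

lemma track:
  assumes "minor_step\<^sup>*\<^sup>* H H'" "gw H"
  shows "\<exists>\<pi>. trk H H' \<pi>"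
  using assms
proof (induction rule: converse_rtranclp_induct)
  case base then show ?case using trk_refl by blast
next
  case (step H H1)
  then obtain \<pi>1 where t: "trk H1 H' \<pi>1" using gw_step by blast
  from step(1) show ?case
  proof (cases rule: minor_step.cases)
    case (del_vertex x) then show ?thesis using trk_del_vertex t by blast
  next
    case (del_edge e) then show ?thesis using trk_del_edge t by blast
  next
    case (contract e a b)
    then show ?thesis using trk_contract[OF step(4) contract(2-5)] t by blast
  qed
qed


lemma path_edge_inj:
  assumes "is_path G u v vs es" "i < length es" "j < length es" "es!i = es!j"
  shows "i = j"
proof -
  have d: "distinct vs" "length vs = Suc (length es)" using assms(1) unfolding is_path_def by auto
  have "{vs!i, vs!Suc i} = {vs!j, vs!Suc j}" using assms unfolding is_path_def by metis
  then have "(vs!i = vs!j \<and> vs!Suc i = vs!Suc j) \<or> (vs!i = vs!Suc j \<and> vs!Suc i = vs!j)"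
    by (auto simp: doubleton_eq_iff)
  then show ?thesis
  proof
    assume "vs!i = vs!j \<and> vs!Suc i = vs!Suc j"
    then show ?thesis using d assms(2,3) nth_eq_iff_index_eq[of vs i j] by auto
  next
    assume h: "vs!i = vs!Suc j \<and> vs!Suc i = vs!j"
    then have "i = Suc j" "Suc i = j" using d assms(2,3) nth_eq_iff_index_eq[of vs i "Suc j"]
      nth_eq_iff_index_eq[of vs "Suc i" j] by auto
    then show ?thesis by simp
  qed
qed

lemma path_add_edge:
  assumes "is_path H u v vs es" "f \<notin> edges H"
  shows "is_path (add_edge H f S) u v vs es"
proof -
  have "set es \<subseteq> edges H" using assms unfolding is_path_def by auto
  then have "es!i \<noteq> f" if "i < length es" for i using that assms(2) nth_mem by fastforce
  then show ?thesis using assms unfolding is_path_def add_edge_def by auto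
qed

lemma path_remove_edge:
  assumes "is_path (add_edge H f S) u v vs es" "f \<notin> set es"
  shows "is_path H u v vs es"
proof -
  have "es!i \<noteq> f" if "i < length es" for i using that assms(2) nth_mem by fastforce
  then show ?thesis using assms unfolding is_path_def add_edge_def by auto
qed

lemma usp_add_core:
  assumes p: "is_path H s t vs es"
    and sh: "\<forall>vs' es'. is_path H s t vs' es' \<longrightarrow> length vs \<le> length vs'"
    and un: "\<forall>vs' es'. is_path H s t vs' es' \<and> length vs' = length vs \<longrightarrow> vs' = vs \<and> es' = es"
    and f: "f \<notin> edges H"
    and long: "\<forall>vs' es'. is_path (add_edge H f S) s t vs' es' \<longrightarrow> f \<in> set es' \<longrightarrow> length es < length es'"
  shows "unique_shortest_path (add_edge H f S) vs es"
  unfolding unique_shortest_path_def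
proof (intro exI conjI allI impI)
  show "is_path (add_edge H f S) s t vs es" using path_add_edge[OF p f] .
  have lv: "length vs = Suc (length es)" using p unfolding is_path_def by auto
  fix vs' es'
  {
    assume a: "is_path (add_edge H f S) s t vs' es'"
    have lv': "length vs' = Suc (length es')" using a unfolding is_path_def by auto
    show "length vs \<le> length vs'"
    proof (cases "f \<in> set es'")
      case True then show ?thesis using long a lv lv' by fastforce
    next
      case False then show ?thesis using sh path_remove_edge[OF a] by blast
    qed
  }
  {
    assume a: "is_path (add_edge H f S) s t vs' es' \<and> length vs' = length vs"
    have lv': "length vs' = Suc (length es')" using a unfolding is_path_def by auto
    have "f \<notin> set es'" using long a lv lv' by fastforce
    then have "is_path H s t vs' es'" using path_remove_edge a by blast
    then show "vs' = vs" "es' = es" using un a by auto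
  }
qed

lemma long_twin:
  assumes p: "is_path H s t vs es"
    and sh: "\<forall>vs' es'. is_path H s t vs' es' \<longrightarrow> length vs \<le> length vs'"
    and un: "\<forall>vs' es'. is_path H s t vs' es' \<and> length vs' = length vs \<longrightarrow> vs' = vs \<and> es' = es"
    and f: "f \<notin> edges H" and g: "g \<in> edges H" "g \<notin> set es"
  shows "\<forall>vs' es'. is_path (add_edge H f (ends H g)) s t vs' es' \<longrightarrow> f \<in> set es' \<longrightarrow> length es < length es'"
proof (intro allI impI)
  fix vs' es' assume a: "is_path (add_edge H f (ends H g)) s t vs' es'" "f \<in> set es'"
  define es'' where "es'' = map (\<lambda>h. if h = f then g else h) es'"
  have l: "length es'' = length es'" unfolding es''_def by simp
  have nth: "es''!i = (if es'!i = f then g else es'!i)" if "i < length es'" for i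
    using that unfolding es''_def by simp
  have se: "set es' \<subseteq> insert f (edges H)" using a(1) unfolding is_path_def add_edge_def by simp
  have "set es'' \<subseteq> edges H" unfolding es''_def using se g(1) by auto
  moreover have "ends H (es''!i) = {vs'!i, vs'!Suc i}" if "i < length es''" for i
  proof -
    have "ends (add_edge H f (ends H g)) (es'!i) = {vs'!i, vs'!Suc i}"
      using a(1) that l unfolding is_path_def by auto
    then show ?thesis using nth[of i] that l by (auto simp: add_edge_def split: if_splits)
  qed
  ultimately have pp: "is_path H s t vs' es''"
    using a(1) l unfolding is_path_def by (auto simp: add_edge_def)
  have "g \<in> set es''" using a(2) unfolding es''_def by force
  then have "es'' \<noteq> es" using g(2) by auto
  then have "length vs' \<noteq> length vs" using un pp by blast
  moreover have "length vs \<le> length vs'" using sh pp by blast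
  ultimately show "length es < length es'"
    using p pp l unfolding is_path_def by auto
qed

lemma walk_lb:
  assumes gw: "gw H" and p: "is_path H s t vs es"
    and sh: "\<forall>vs' es'. is_path H s t vs' es' \<longrightarrow> length vs \<le> length vs'"
    and w: "walk H x s a" "walk H x t b"
  shows "length es \<le> a + b"
proof -
  have "walk H s t (a + b)" using walk_append[OF walk_rev[OF w(1)] w(2)] .
  moreover have "s \<in> verts H"
  proof -
    have "vs \<noteq> []" "s = hd vs" "set vs \<subseteq> verts H" using p unfolding is_path_def by auto
    then show ?thesis by auto
  qed
  ultimately obtain vs' es' where pp: "is_path H s t vs' es'" "length es' \<le> a + b"
    using walk_to_path gw by blast
  have "length vs \<le> length vs'" using sh pp(1) by blast
  moreover have "length vs = Suc (length es)" "length vs' = Suc (length es')"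
    using p pp(1) unfolding is_path_def by auto
  ultimately show ?thesis using pp(2) by linarith
qed

lemma long_general:
  assumes p: "is_path H s t vs es"
    and f: "f \<notin> edges H"
    and c1: "\<forall>a b. walk H x s a \<longrightarrow> walk H y t b \<longrightarrow> length es \<le> a + b"
    and c2: "\<forall>a b. walk H y s a \<longrightarrow> walk H x t b \<longrightarrow> length es \<le> a + b"
  shows "\<forall>vs' es'. is_path (add_edge H f {x, y}) s t vs' es' \<longrightarrow> f \<in> set es' \<longrightarrow> length es < length es'"
proof (intro allI impI)
  fix vs' es' assume a: "is_path (add_edge H f {x, y}) s t vs' es'" "f \<in> set es'"
  then obtain k where k: "k < length es'" "es'!k = f" by (auto simp: in_set_conv_nth)
  have ne: "es'!i \<noteq> f" if "i < length es'" "i \<noteq> k" for i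
    using path_edge_inj[OF a(1) that(1) k(1)] k that by auto
  have ed: "es'!i \<in> edges (add_edge H f {x, y})" if "i < length es'" for i
    using a(1) that unfolding is_path_def by auto
  have gd: "es'!i \<in> edges H \<and> ends H (es'!i) = ends (add_edge H f {x, y}) (es'!i)"
    if "i < length es'" "i \<noteq> k" for i
  proof -
    have "es'!i \<noteq> f" using ne that by blast
    moreover have "es'!i \<in> insert f (edges H)" using ed[OF that(1)] by (simp add: add_edge_def)
    ultimately show ?thesis by (simp add: add_edge_def)
  qed
  have w1: "walk H s (vs'!k) k"
    by (rule path_prefix[OF a(1)]) (use k gd in \<open>simp_all\<close>)
  have w2: "walk H (vs'!Suc k) t (length es' - Suc k)"
    by (rule path_suffix[OF a(1)]) (use k gd in \<open>simp_all\<close>)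
  have "ends (add_edge H f {x, y}) (es'!k) = {vs'!k, vs'!Suc k}" using a(1) k unfolding is_path_def by auto
  then have "{x, y} = {vs'!k, vs'!Suc k}" using k by (simp add: add_edge_def)
  then have "(x = vs'!k \<and> y = vs'!Suc k) \<or> (y = vs'!k \<and> x = vs'!Suc k)" by (auto simp: doubleton_eq_iff)
  have r1: "walk H (vs'!k) s k" using walk_rev[OF w1] .
  from \<open>(x = vs'!k \<and> y = vs'!Suc k) \<or> (y = vs'!k \<and> x = vs'!Suc k)\<close>
  have "length es \<le> k + (length es' - Suc k)"
  proof
    assume "x = vs'!k \<and> y = vs'!Suc k"
    then show ?thesis using c1 r1 w2 by blast
  next
    assume "y = vs'!k \<and> x = vs'!Suc k"
    then show ?thesis using c2 r1 w2 by blast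
  qed
  then show "length es < length es'" using k by linarith
qed


lemma ivt:
  assumes "conn H Y x y" "x \<in> Y" "walk H x s a0"
    "(LEAST n. walk H x s n) \<le> m" "m \<le> (LEAST n. walk H y s n)"
  shows "\<exists>u\<in>Y. (\<exists>a. walk H u s a) \<and> (LEAST n. walk H u s n) = m"
  using assms
proof (induction arbitrary: a0 rule: converse_rtranclp_induct)
  case base
  then show ?case by auto
next
  case (step x x')
  show ?case
  proof (cases "(LEAST n. walk H x s n) = m")
    case True then show ?thesis using step by blast
  next
    case False
    have wx: "walk H x s (LEAST n. walk H x s n)" using step(5) by (rule LeastI)
    from step(1) obtain g where g: "x' \<in> Y" "g \<in> edges H" "ends H g = {x, x'}" unfolding cstep_def by auto
    have "walk H x' s (Suc (LEAST n. walk H x s n))"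
      using wS[OF g(2) _ wx] g(3) by (simp add: insert_commute)
    then have "(LEAST n. walk H x' s n) \<le> Suc (LEAST n. walk H x s n)" by (rule Least_le)
    moreover have "Suc (LEAST n. walk H x s n) \<le> m" using False step(6) by linarith
    ultimately have "(LEAST n. walk H x' s n) \<le> m" by linarith
    then show ?thesis using step.IH g(1) step(7) \<open>walk H x' s _\<close> by blast
  qed
qed

lemma path_walks:
  assumes p: "is_path H s t vs es" "k \<le> length es"
  shows "walk H (vs!k) s k" "walk H (vs!k) t (length es - k)"
proof -
  have "walk H s (vs!k) k" by (rule path_prefix[OF p]) (use p in \<open>auto simp: is_path_def\<close>)
  then show "walk H (vs!k) s k" by (rule walk_rev)
  show "walk H (vs!k) t (length es - k)" by (rule path_suffix[OF p]) (use p in \<open>auto simp: is_path_def\<close>)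
qed

lemma pair_exists:
  assumes gw: "gw H" and p: "is_path H s t vs es"
    and sh: "\<forall>vs' es'. is_path H s t vs' es' \<longrightarrow> length vs \<le> length vs'"
    and ij: "i < j" "j < length es"
    and Yc: "\<forall>x1\<in>Y. \<forall>x2\<in>Y. conn H Y x1 x2"
    and Y: "vs!i \<in> Y" "vs!j \<in> Y \<or> vs!Suc j \<in> Y"
  shows "\<exists>u\<in>Y. (\<forall>a b. walk H u s a \<longrightarrow> walk H (vs!Suc i) t b \<longrightarrow> length es \<le> a + b)
              \<and> (\<forall>a b. walk H (vs!Suc i) s a \<longrightarrow> walk H u t b \<longrightarrow> length es \<le> a + b)"
proof -
  obtain k where k: "vs!k \<in> Y" "i < k" "k \<le> length es"
  proof (cases "vs!j \<in> Y")
    case True then show ?thesis using that[of j] ij by simp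
  next
    case False then show ?thesis using that[of "Suc j"] ij Y(2) by simp
  qed
  have wi: "walk H (vs!i) s i" using path_walks[OF p] ij by auto
  have wk: "walk H (vs!k) s k" "walk H (vs!k) t (length es - k)" using path_walks[OF p k(3)] by auto
  have "walk H (vs!k) s (LEAST n. walk H (vs!k) s n)" using wk(1) by (rule LeastI)
  from walk_lb[OF gw p sh this wk(2)] k
  have Dk: "Suc i \<le> (LEAST n. walk H (vs!k) s n)" by linarith
  have "(LEAST n. walk H (vs!i) s n) \<le> i" using wi by (rule Least_le)
  then have Di: "(LEAST n. walk H (vs!i) s n) \<le> Suc i" by simp
  have "conn H Y (vs!i) (vs!k)" using Yc Y(1) k(1) by blast
  from ivt[OF this Y(1) wi Di Dk]
  obtain u a1 where u: "u \<in> Y" "walk H u s a1" "(LEAST n. walk H u s n) = Suc i" by blast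
  have "walk H u s (LEAST n. walk H u s n)" using u(2) by (rule LeastI)
  then have wu: "walk H u s (Suc i)" using u(3) by simp
  have wq: "walk H (vs!Suc i) s (Suc i)" "walk H (vs!Suc i) t (length es - Suc i)"
    using path_walks[OF p] ij by auto
  show ?thesis
  proof (intro bexI[OF _ u(1)] conjI allI impI)
    fix a b assume ab: "walk H u s a" "walk H (vs!Suc i) t b"
    have "(LEAST n. walk H u s n) \<le> a" using ab(1) by (rule Least_le)
    then have "Suc i \<le> a" using u(3) by simp
    moreover have "length es \<le> Suc i + b" using walk_lb[OF gw p sh wq(1) ab(2)] .
    ultimately show "length es \<le> a + b" by linarith
  next
    fix a b assume ab: "walk H (vs!Suc i) s a" "walk H u t b"
    have "length es \<le> a + (length es - Suc i)" using walk_lb[OF gw p sh ab(1) wq(2)] .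
    moreover have "length es \<le> Suc i + b" using walk_lb[OF gw p sh wu ab(2)] .
    ultimately show "length es \<le> a + b" using ij by linarith
  qed
qed


lemma usp_set_finite:
  assumes "finite (verts G)"
  shows "finite {length vs | vs es. unique_shortest_path G vs es}"
proof -
  have "{length vs | vs es. unique_shortest_path G vs es} \<subseteq> {..card (verts G)}"
  proof
    fix n assume "n \<in> {length vs | vs es. unique_shortest_path G vs es}"
    then obtain vs es u v where "n = length vs" "is_path G u v vs es"
      unfolding unique_shortest_path_def by blast
    then have "distinct vs" "set vs \<subseteq> verts G" "n = length vs" unfolding is_path_def by auto
    then show "n \<in> {..card (verts G)}" using assms by (metis atMost_iff card_mono distinct_card)
  qed
  then show ?thesis using finite_subset by blast
qed

lemma usp_single: "x \<in> verts G \<Longrightarrow> unique_shortest_path G [x] []"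
  unfolding unique_shortest_path_def
proof (intro exI[of _ x] conjI allI impI)
  assume "x \<in> verts G"
  then show "is_path G x x [x] []" unfolding is_path_def by auto
  fix vs' es'
  show "length [x] \<le> length vs'" if "is_path G x x vs' es'"
    using that unfolding is_path_def by auto
  assume a: "is_path G x x vs' es' \<and> length vs' = length [x]"
  then have "length es' = 0" "hd vs' = x" "length vs' = 1" unfolding is_path_def by auto
  then show "vs' = [x]" "es' = []" by (auto simp: length_Suc_conv)
qed

lemma usp_ge:
  "finite (verts G) \<Longrightarrow> unique_shortest_path G vs es \<Longrightarrow> length vs \<le> usp G"
  unfolding usp_def by (rule Max_ge[OF usp_set_finite]) auto

lemma usp_attained:
  assumes "finite (verts G)" "verts G \<noteq> {}"
  shows "\<exists>vs es. unique_shortest_path G vs es \<and> length vs = usp G"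
proof -
  obtain x where "x \<in> verts G" using assms by auto
  then have ne: "{length vs | vs es. unique_shortest_path G vs es} \<noteq> {}" using usp_single by blast
  show ?thesis using Max_in[OF usp_set_finite[OF assms(1)] ne] unfolding usp_def by auto
qed

lemma wf_gw: "wf_graph G \<Longrightarrow> gw G" unfolding wf_graph_def gw_def by auto

lemma finish:
  assumes wfH: "wf_graph H" and st: "minor_step\<^sup>*\<^sup>* H H'" and t: "trk H H' \<pi>"
    and iso: "bij_betw fv (verts H') (verts G)" "bij_betw fe (edges H') (edges G - {e})"
      "\<forall>h\<in>edges H'. ends G (fe h) = fv ` ends H' h"
    and e: "e \<in> edges G" "ends G e = {v, w}"
    and g0: "g0 \<in> edges H'" "ends G (fe g0) = {v, w}"
    and f: "f \<notin> edges H" and S: "S \<subseteq> verts H" "card S = 2" "\<pi> ` S = ends H' g0"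
    and P: "unique_shortest_path (add_edge H f S) vs es" "length vs = usp H"
  shows "\<exists>H2. wf_graph H2 \<and> is_minor G H2 \<and> sp H2 \<le> sp H"
proof (intro exI conjI)
  let ?H2 = "add_edge H f S"
  show "wf_graph ?H2" using wfH S unfolding wf_graph_def add_edge_def by auto
  have gwH': "gw H'" and sub: "edges H' \<subseteq> edges H" using t unfolding trk_def by auto
  have "card (ends H' g0) = 2" "ends H' g0 \<subseteq> verts H'" using gwH' g0 unfolding gw_def by auto
  moreover have T: "\<forall>f S. f \<notin> edges H \<longrightarrow> S \<subseteq> verts H \<longrightarrow> card (\<pi> ` S) = 2 \<longrightarrow> \<pi> ` S \<subseteq> verts H' \<longrightarrow>
        minor_step\<^sup>*\<^sup>* (add_edge H f S) (add_edge H' f (\<pi> ` S))" using t unfolding trk_def by blast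
  ultimately have "minor_step\<^sup>*\<^sup>* ?H2 (add_edge H' f (\<pi> ` S))"
    using f S(1) S(3) by metis
  moreover have "graph_iso (add_edge H' f (ends H' g0)) G"
    unfolding graph_iso_def
  proof (intro exI conjI ballI)
    show "bij_betw fv (verts (add_edge H' f (ends H' g0))) (verts G)" using iso(1) by (simp add: add_edge_def)
    have fH': "f \<notin> edges H'" using f sub by auto
    have img: "fe ` edges H' = edges G - {e}" using iso(2) by (simp add: bij_betw_def)
    have inj: "inj_on fe (edges H')" using iso(2) by (simp add: bij_betw_def)
    have "inj_on (fe(f := e)) (insert f (edges H'))"
      using inj fH' img unfolding inj_on_def by (auto simp: image_iff)
    moreover have "(fe(f := e)) ` insert f (edges H') = edges G"
    proof -
      have "(fe(f := e)) ` insert f (edges H') = insert e (fe ` edges H')"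
        using fH' by (auto simp: image_iff)
      then show ?thesis using img e(1) by auto
    qed
    ultimately show "bij_betw (fe(f := e)) (edges (add_edge H' f (ends H' g0))) (edges G)"
      by (simp add: add_edge_def bij_betw_def)
    fix h assume h: "h \<in> edges (add_edge H' f (ends H' g0))"
    show "ends G ((fe(f := e)) h) = fv ` ends (add_edge H' f (ends H' g0)) h"
    proof (cases "h = f")
      case True then show ?thesis using e g0 iso(3) by (simp add: add_edge_def)
    next
      case False then show ?thesis using h iso(3) by (simp add: add_edge_def)
    qed
  qed
  ultimately show "is_minor G ?H2" unfolding is_minor_def using S(3) by auto
  have fin: "finite (verts ?H2)" using wfH unfolding wf_graph_def add_edge_def by simp
  have "length vs \<le> usp ?H2" using usp_ge[OF fin P(1)] .
  moreover have "verts ?H2 = verts H" by (simp add: add_edge_def)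
  ultimately show "sp ?H2 \<le> sp H" unfolding sp_def using P(2) by simp
qed


lemma two_elems: "finite B \<Longrightarrow> 2 \<le> card B \<Longrightarrow> \<exists>a b. a \<in> B \<and> b \<in> B \<and> a \<noteq> b"
proof (rule ccontr)
  assume f: "finite B" "2 \<le> card B" "\<not> (\<exists>a b. a \<in> B \<and> b \<in> B \<and> a \<noteq> b)"
  then have "card B \<le> Suc 0" using card_le_Suc0_iff_eq[OF f(1)] by blast
  then show False using f(2) by simp
qed

lemma extend:
  assumes wfG: "wf_graph G"
    and c3: "card {e' \<in> edges G. ends G e' = {v, w}} \<ge> 3"
    and e: "e \<in> edges G" "ends G e = {v, w}"
    and wfH: "wf_graph H" and mi: "is_minor (delete_edge G e) H"
  shows "\<exists>H2. wf_graph H2 \<and> is_minor G H2 \<and> sp H2 \<le> sp H"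
proof -
  have gwH: "gw H" using wfH by (rule wf_gw)
  obtain H' where st: "minor_step\<^sup>*\<^sup>* H H'" and gi: "graph_iso H' (delete_edge G e)"
    using mi unfolding is_minor_def by blast
  obtain fv fe where iso: "bij_betw fv (verts H') (verts G)" "bij_betw fe (edges H') (edges G - {e})"
      "\<forall>h\<in>edges H'. ends G (fe h) = fv ` ends H' h"
    using gi unfolding graph_iso_def delete_edge_def by auto
  obtain \<pi> where t: "trk H H' \<pi>" using track[OF st gwH] by blast
  have gwH': "gw H'" and subE: "edges H' \<subseteq> edges H" using t unfolding trk_def by auto
  have endsH': "\<forall>g\<in>edges H'. ends H' g = \<pi> ` ends H g" using t unfolding trk_def by auto
  have finV: "finite (verts H)" "verts H \<noteq> {}" and finE: "finite (edges H)"
    using wfH unfolding wf_graph_def by auto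
  obtain vs es where P: "unique_shortest_path H vs es" "length vs = usp H"
    using usp_attained[OF finV] by blast
  then obtain s t where p: "is_path H s t vs es"
    and sh: "\<forall>vs' es'. is_path H s t vs' es' \<longrightarrow> length vs \<le> length vs'"
    and un: "\<forall>vs' es'. is_path H s t vs' es' \<and> length vs' = length vs \<longrightarrow> vs' = vs \<and> es' = es"
    unfolding unique_shortest_path_def by blast
  obtain f where f: "f \<notin> edges H" using ex_new_if_finite[OF infinite_UNIV_nat finE] by blast
  define A where "A = {e' \<in> edges G. ends G e' = {v, w}}"
  have finA: "finite A" using wfG unfolding A_def wf_graph_def by auto
  have "e \<in> A" using e unfolding A_def by auto
  then have "card (A - {e}) \<ge> 2" using c3 finA unfolding A_def[symmetric] by auto
  then obtain a1 a2 where a12: "a1 \<in> A - {e}" "a2 \<in> A - {e}" "a1 \<noteq> a2"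
    using two_elems[of "A - {e}"] finA by blast
  have img: "fe ` edges H' = edges G - {e}" using iso(2) by (simp add: bij_betw_def)
  have "a1 \<in> fe ` edges H'" using a12(1) img unfolding A_def by blast
  then obtain g1 where g1: "g1 \<in> edges H'" "fe g1 = a1" by blast
  have "a2 \<in> fe ` edges H'" using a12(2) img unfolding A_def by blast
  then obtain g2 where g2: "g2 \<in> edges H'" "fe g2 = a2" by blast
  have g12: "g1 \<noteq> g2" using g1 g2 a12 by auto
  have W1: "ends G (fe g1) = {v, w}" "ends G (fe g2) = {v, w}" using g1 g2 a12 unfolding A_def by auto
  have vsv: "vs!k \<in> verts H" if "k \<le> length es" for k
  proof -
    have "length vs = Suc (length es)" "set vs \<subseteq> verts H" using p unfolding is_path_def by auto
    moreover have "k < length vs" using that calculation by simp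
    ultimately show ?thesis using nth_mem by blast
  qed
  show ?thesis
  proof (cases "g1 \<notin> set es \<or> g2 \<notin> set es")
    case True
    then obtain g0 where g0: "g0 \<in> edges H'" "ends G (fe g0) = {v, w}" "g0 \<notin> set es"
      using g1 g2 W1 by blast
    have g0H: "g0 \<in> edges H" using g0 subE by auto
    have S: "ends H g0 \<subseteq> verts H" "card (ends H g0) = 2" using gwH g0H unfolding gw_def by auto
    have U: "unique_shortest_path (add_edge H f (ends H g0)) vs es"
      by (rule usp_add_core[OF p sh un f long_twin[OF p sh un f g0H g0(3)]])
    have S3: "\<pi> ` ends H g0 = ends H' g0" using endsH' g0(1) by simp
    show ?thesis by (rule finish[OF wfH st t iso e g0(1,2) f S S3 U P(2)])
  next
    case False
    then obtain i1 i2 where i12: "i1 < length es" "es!i1 = g1" "i2 < length es" "es!i2 = g2"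
      by (auto simp: in_set_conv_nth)
    have "i1 \<noteq> i2" using i12 g12 by auto
    have "\<exists>i j. i < j \<and> j < length es \<and> es!i \<in> edges H' \<and> es!j \<in> edges H' \<and>
      ends G (fe (es!i)) = {v, w} \<and> ends G (fe (es!j)) = {v, w}"
    proof (cases "i1 < i2")
      case True then show ?thesis using i12 g1 g2 W1 by blast
    next
      case False then have "i2 < i1" using \<open>i1 \<noteq> i2\<close> by simp
      then show ?thesis using i12 g1 g2 W1 by blast
    qed
    then obtain i j where ij: "i < j" "j < length es" "es!i \<in> edges H'" "es!j \<in> edges H'"
      "ends G (fe (es!i)) = {v, w}" "ends G (fe (es!j)) = {v, w}" by blast
    have eHi: "ends H (es!i) = {vs!i, vs!Suc i}" "ends H (es!j) = {vs!j, vs!Suc j}"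
      using p ij unfolding is_path_def by auto
    have Ei: "ends H' (es!i) = {\<pi> (vs!i), \<pi> (vs!Suc i)}" "ends H' (es!j) = {\<pi> (vs!j), \<pi> (vs!Suc j)}"
      using endsH' ij eHi by auto
    have ci: "card (ends H' (es!i)) = 2" "ends H' (es!i) \<subseteq> verts H'" "ends H' (es!j) \<subseteq> verts H'"
      using gwH' ij unfolding gw_def by auto
    have neq: "\<pi> (vs!i) \<noteq> \<pi> (vs!Suc i)" using ci(1) Ei(1) by auto
    have "fv ` ends H' (es!i) = fv ` ends H' (es!j)" using iso(3) ij(3-6) by simp
    moreover have "inj_on fv (verts H')" using iso(1) by (simp add: bij_betw_def)
    ultimately have "ends H' (es!i) = ends H' (es!j)" using ci(2,3) inj_on_image_eq_iff by blast
    then have "\<pi> (vs!i) \<in> {\<pi> (vs!j), \<pi> (vs!Suc j)}" using Ei by (metis insertI1)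
    then have Yj: "\<pi> (vs!j) = \<pi> (vs!i) \<or> \<pi> (vs!Suc j) = \<pi> (vs!i)" by auto
    define Y where "Y = {x \<in> verts H. \<pi> x = \<pi> (vs!i)}"
    have yv: "\<pi> (vs!i) \<in> verts H'" using ci(2) Ei(1) by auto
    have Yc: "\<forall>x1\<in>Y. \<forall>x2\<in>Y. conn H Y x1 x2"
      using t yv unfolding trk_def Y_def by auto
    have Yi: "vs!i \<in> Y" "vs!j \<in> Y \<or> vs!Suc j \<in> Y"
      using Yj vsv ij unfolding Y_def by auto
    obtain u where u: "u \<in> Y"
      "\<forall>a b. walk H u s a \<longrightarrow> walk H (vs!Suc i) t b \<longrightarrow> length es \<le> a + b"
      "\<forall>a b. walk H (vs!Suc i) s a \<longrightarrow> walk H u t b \<longrightarrow> length es \<le> a + b"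
      using pair_exists[OF gwH p sh ij(1,2) Yc Yi] by blast
    have uq: "u \<noteq> vs!Suc i" using u(1) neq unfolding Y_def by auto
    have S: "{u, vs!Suc i} \<subseteq> verts H" "card {u, vs!Suc i} = 2" "\<pi> ` {u, vs!Suc i} = ends H' (es!i)"
      using u(1) vsv[of "Suc i"] ij uq Ei(1) unfolding Y_def by auto
    have U: "unique_shortest_path (add_edge H f {u, vs!Suc i}) vs es"
      by (rule usp_add_core[OF p sh un f long_general[OF p f u(2,3)]])
    show ?thesis by (rule finish[OF wfH st t iso e ij(3,5) f S U P(2)])
  qed
qed

theorem lemma6p9:
  assumes "wf_graph G"
    and "card {e' \<in> edges G. ends G e' = {v, w}} \<ge> 3"
    and "e \<in> edges G" and "ends G e = {v, w}"
  shows "sp_floor (delete_edge G e) = sp_floor G"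
proof -
  let ?S = "{sp H | H. wf_graph H \<and> is_minor G H}"
  let ?T = "{sp H | H. wf_graph H \<and> is_minor (delete_edge G e) H}"
  have isoG: "graph_iso G G" unfolding graph_iso_def by (intro exI[of _ id]) auto
  have "is_minor G G" unfolding is_minor_def using isoG by blast
  then have Sne: "?S \<noteq> {}" using assms(1) by blast
  have wfD: "wf_graph (delete_edge G e)" using assms(1) unfolding wf_graph_def delete_edge_def by auto
  have isoD: "graph_iso (delete_edge G e) (delete_edge G e)" unfolding graph_iso_def by (intro exI[of _ id]) auto
  have "is_minor (delete_edge G e) (delete_edge G e)" unfolding is_minor_def using isoD by blast
  then have Tne: "?T \<noteq> {}" using wfD by blast
  have sub: "?S \<subseteq> ?T"
  proof
    fix n assume "n \<in> ?S"
    then obtain H where H: "n = sp H" "wf_graph H" "is_minor G H" by blast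
    then obtain H' where st: "minor_step\<^sup>*\<^sup>* H H'" and gi: "graph_iso H' G" unfolding is_minor_def by blast
    obtain fv fe where iso: "bij_betw fv (verts H') (verts G)" "bij_betw fe (edges H') (edges G)"
      "\<forall>h\<in>edges H'. ends G (fe h) = fv ` ends H' h"
      using gi unfolding graph_iso_def by blast
    obtain e0 where e0: "e0 \<in> edges H'" "fe e0 = e" using iso(2) assms(3)
      by (metis bij_betw_imp_surj_on imageE)
    have "minor_step H' (delete_edge H' e0)" using e0(1) by (rule minor_step.del_edge)
    then have st2: "minor_step\<^sup>*\<^sup>* H (delete_edge H' e0)" using st by simp
    have "bij_betw fe (edges H' - {e0}) (edges G - {e})"
    proof -
      have inj: "inj_on fe (edges H')" and im: "fe ` edges H' = edges G" using iso(2) by (auto simp: bij_betw_def)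
      then have "fe ` (edges H' - {e0}) = edges G - {e}" using e0 by (auto simp: inj_on_def)
      moreover have "inj_on fe (edges H' - {e0})" using inj by (rule inj_on_subset) auto
      ultimately show ?thesis by (simp add: bij_betw_def)
    qed
    then have "graph_iso (delete_edge H' e0) (delete_edge G e)"
      unfolding graph_iso_def delete_edge_def using iso(1,3) by (intro exI[of _ fv] exI[of _ fe]) auto
    then have "is_minor (delete_edge G e) H" unfolding is_minor_def using st2 by blast
    then show "n \<in> ?T" using H by blast
  qed
  have le1: "sp_floor (delete_edge G e) \<le> sp_floor G"
    unfolding sp_floor_def by (rule cInf_superset_mono[OF Sne bdd_below_bot sub])
  have "Inf ?T \<in> ?T" using Inf_nat_def1[OF Tne] .
  then obtain H where H: "Inf ?T = sp H" "wf_graph H" "is_minor (delete_edge G e) H" by auto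
  obtain H2 where H2: "wf_graph H2" "is_minor G H2" "sp H2 \<le> sp H"
    using extend[OF assms H(2,3)] by blast
  have "Inf ?S \<le> sp H2" using H2 by (intro cInf_lower) auto
  then have le2: "sp_floor G \<le> sp_floor (delete_edge G e)" unfolding sp_floor_def using H H2 by simp
  show ?thesis using le1 le2 by simp
qed

end
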